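(* Let $V$ be a finite set of variables and $\mathcal C=\{C_1,\dots,C_m\}$ a set of betweenness constraints over $V$ containing no complete triple. Let $\phi:V\to\{0,1,2,3\}$ be chosen uniformly at random and let $X=w(\mathcal C,\phi)$. Then $\mathbb E[X^2]\ge \frac{11}{768}m$.
   Context: A betweenness constraint is $(v_i,\{v_j,v_k\})$ with $v_i,v_j,v_k\in V$ distinct; a bijection $\alpha:V\to\{1,\dots,|V|\}$ satisfies it if $\alpha(v_j)<\alpha(v_i)<\alpha(v_k)$ or $\alpha(v_k)<\alpha(v_i)<\alpha(v_j)$. For a constraint $C$, $vars(C)$ is its set of three variables; three distinct constraints $A,B,C\in\mathcal C$ form a complete triple if $vars(A)=vars(B)=vars(C)$. For $\phi:V\to\{0,1,2,3\}$ let $\ell_i(\phi)=|\phi^{-1}(i)|$. A random $\phi$-compatible bijection $\alpha$ is obtained by assigning, uniformly at random, the values $\sum_{i<j}\ell_i(\phi)+1,\dots,\sum_{i\le j}\ell_i(\phi)$ bijectively to the variables $v$ with $\phi(v)=j$, for each $j=0,1,2,3$. For a constraint $C_p$ let $\nu_p(\alpha)=1$ if $\alpha$ satisfies $C_p$ and $0$ otherwise; define $w(C_p,\phi)=\mathbb E[\nu_p(\alpha)]-1/3$, the expectation over a random $\phi$-compatible bijection $\alpha$ for fixed $\phi$, and $w(\mathcal C,\phi)=\sum_{p=1}^m w(C_p,\phi)$. *)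

theory Defs
  imports Complex_Main "HOL-Library.FuncSet"
begin

text \<open>A betweenness constraint (v_i, {v_j, v_k}) is represented as a pair (x, P)
  with x the middle variable and P the unordered pair of outer variables.\<close>
type_synonym 'a btw = "'a \<times> 'a set"

definition btw_constraint :: "'a set \<Rightarrow> 'a btw \<Rightarrow> bool" where
  "btw_constraint V c \<longleftrightarrow>
     (\<exists>x y z. c = (x, {y, z}) \<and> x \<in> V \<and> y \<in> V \<and> z \<in> V \<and> x \<noteq> y \<and> x \<noteq> z \<and> y \<noteq> z)"

definition vars :: "'a btw \<Rightarrow> 'a set" where
  "vars c = insert (fst c) (snd c)"

definition satisfies :: "('a \<Rightarrow> nat) \<Rightarrow> 'a btw \<Rightarrow> bool" where
  "satisfies \<alpha> c \<longleftrightarrow>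
     (\<exists>y z. snd c = {y, z} \<and> \<alpha> y < \<alpha> (fst c) \<and> \<alpha> (fst c) < \<alpha> z)"

definition has_complete_triple :: "'a btw set \<Rightarrow> bool" where
  "has_complete_triple \<C> \<longleftrightarrow>
     (\<exists>A\<in>\<C>. \<exists>B\<in>\<C>. \<exists>C\<in>\<C>. A \<noteq> B \<and> A \<noteq> C \<and> B \<noteq> C \<and>
        vars A = vars B \<and> vars B = vars C)"

definition lvl :: "'a set \<Rightarrow> ('a \<Rightarrow> nat) \<Rightarrow> nat \<Rightarrow> nat" where
  "lvl V \<phi> i = card {v \<in> V. \<phi> v = i}"

definition compatible :: "'a set \<Rightarrow> ('a \<Rightarrow> nat) \<Rightarrow> ('a \<Rightarrow> nat) set" where
  "compatible V \<phi> =
     {\<alpha> \<in> V \<rightarrow>\<^sub>E {1..card V}. bij_betw \<alpha> V {1..card V} \<and>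
        (\<forall>v\<in>V. (\<Sum>i<\<phi> v. lvl V \<phi> i) + 1 \<le> \<alpha> v \<and> \<alpha> v \<le> (\<Sum>i\<le>\<phi> v. lvl V \<phi> i))}"

definition w :: "'a set \<Rightarrow> 'a btw \<Rightarrow> ('a \<Rightarrow> nat) \<Rightarrow> real" where
  "w V c \<phi> = real (card {\<alpha> \<in> compatible V \<phi>. satisfies \<alpha> c}) / real (card (compatible V \<phi>)) - 1/3"

definition W :: "'a set \<Rightarrow> 'a btw set \<Rightarrow> ('a \<Rightarrow> nat) \<Rightarrow> real" where
  "W V \<C> \<phi> = (\<Sum>c\<in>\<C>. w V c \<phi>)"

end

theory Submission
  imports Defs
begin


lemma card_lvl_less:
  assumes "finite V"
  shows "card {v\<in>V. \<phi> v < p} = (\<Sum>i<p. lvl V \<phi> i)"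
proof (induction p)
  case 0 then show ?case by simp
next
  case (Suc p)
  have "{v\<in>V. \<phi> v < Suc p} = {v\<in>V. \<phi> v < p} \<union> {v\<in>V. \<phi> v = p}" by auto
  moreover have "card ({v\<in>V. \<phi> v < p} \<union> {v\<in>V. \<phi> v = p}) = card {v\<in>V. \<phi> v < p} + card {v\<in>V. \<phi> v = p}"
    by (rule card_Un_disjoint) (use assms in auto)
  ultimately show ?case using Suc by (simp add: lvl_def)
qed

lemma compat_mono:
  assumes "\<alpha> \<in> compatible V \<phi>" "u \<in> V" "v \<in> V" "\<phi> u < \<phi> v"
  shows "\<alpha> u < \<alpha> v"
proof -
  have "\<alpha> u \<le> (\<Sum>i\<le>\<phi> u. lvl V \<phi> i)" using assms unfolding compatible_def by auto
  also have "\<dots> = (\<Sum>i<Suc (\<phi> u). lvl V \<phi> i)" using lessThan_Suc_atMost by simp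
  also have "\<dots> \<le> (\<Sum>i<\<phi> v. lvl V \<phi> i)" by (rule sum_mono2) (use assms(4) in auto)
  also have "\<dots> < \<alpha> v" using assms unfolding compatible_def by auto
  finally show ?thesis .
qed

lemma compat_nonempty:
  assumes "finite V"
  shows "compatible V \<phi> \<noteq> {}"
proof -
  define n where "n = card V"
  obtain r where r: "bij_betw r V {0..<n}" using ex_bij_betw_finite_nat[OF assms] n_def by blast
  have rl: "v \<in> V \<Longrightarrow> r v < n" for v using r by (auto simp: bij_betw_def)
  define key where "key v = \<phi> v * n + r v" for v
  have keyinj: "u \<in> V \<Longrightarrow> v \<in> V \<Longrightarrow> key u = key v \<Longrightarrow> u = v" for u v
  proof -
    assume a: "u \<in> V" "v \<in> V" "key u = key v"
    have "r u = (\<phi> u * n + r u) mod n" using rl[OF a(1)] by simp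
    moreover have "r v = (\<phi> v * n + r v) mod n" using rl[OF a(2)] by simp
    ultimately have "r u = r v" using a(3) unfolding key_def by metis
    then show "u = v" using r a by (auto simp: bij_betw_def inj_on_def)
  qed
  define S where "S v = {u\<in>V. key u \<le> key v}" for v
  define \<alpha> where "\<alpha> v = (if v \<in> V then card (S v) else undefined)" for v
  have finS: "finite (S v)" for v using assms by (auto simp: S_def)
  have rng: "v \<in> V \<Longrightarrow> \<alpha> v \<in> {1..n}" for v
  proof -
    assume v: "v \<in> V"
    have "v \<in> S v" using v by (auto simp: S_def)
    then have "card (S v) \<ge> 1" using finS[of v] by (metis One_nat_def Suc_leI card_gt_0_iff empty_iff)
    moreover have "card (S v) \<le> n" unfolding n_def by (rule card_mono[OF assms]) (auto simp: S_def)
    ultimately show ?thesis using v by (simp add: \<alpha>_def)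
  qed
  have lt: "u \<in> V \<Longrightarrow> v \<in> V \<Longrightarrow> key u < key v \<Longrightarrow> \<alpha> u < \<alpha> v" for u v
  proof -
    assume a: "u \<in> V" "v \<in> V" "key u < key v"
    have "S u \<subseteq> S v" using a by (auto simp: S_def)
    moreover have "v \<in> S v" "v \<notin> S u" using a by (auto simp: S_def)
    ultimately have "S u \<subset> S v" by blast
    then show ?thesis using a finS[of v] by (simp add: \<alpha>_def psubset_card_mono)
  qed
  have inj: "inj_on \<alpha> V"
  proof (rule inj_onI)
    fix u v assume a: "u \<in> V" "v \<in> V" "\<alpha> u = \<alpha> v"
    show "u = v"
    proof (rule ccontr)
      assume "u \<noteq> v"
      then have "key u \<noteq> key v" using keyinj a by blast
      then have "key u < key v \<or> key v < key u" by arith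
      then show False using lt a by fastforce
    qed
  qed
  have img: "\<alpha> ` V = {1..n}"
  proof (rule card_subset_eq)
    show "\<alpha> ` V \<subseteq> {1..n}" using rng by auto
    show "card (\<alpha> ` V) = card {1..n}" using card_image[OF inj] n_def by simp
  qed simp
  have bounds: "v \<in> V \<Longrightarrow> (\<Sum>i<\<phi> v. lvl V \<phi> i) + 1 \<le> \<alpha> v \<and> \<alpha> v \<le> (\<Sum>i\<le>\<phi> v. lvl V \<phi> i)" for v
  proof -
    assume v: "v \<in> V"
    have sub1: "{u\<in>V. \<phi> u < \<phi> v} \<union> {v} \<subseteq> S v"
    proof
      fix u assume "u \<in> {u\<in>V. \<phi> u < \<phi> v} \<union> {v}"
      then consider "u = v" | "u \<in> V" "\<phi> u < \<phi> v" by auto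
      then show "u \<in> S v"
      proof cases
        case 1 then show ?thesis using v by (simp add: S_def)
      next
        case 2
        have "key u < \<phi> u * n + n" using rl[OF 2(1)] by (simp add: key_def)
        also have "\<phi> u * n + n = Suc (\<phi> u) * n" by simp
        also have "\<dots> \<le> \<phi> v * n" using 2(2) by (intro mult_le_mono1) simp
        also have "\<dots> \<le> key v" by (simp add: key_def)
        finally show ?thesis using 2 by (simp add: S_def)
      qed
    qed
    have "card ({u\<in>V. \<phi> u < \<phi> v} \<union> {v}) = card {u\<in>V. \<phi> u < \<phi> v} + 1"
      using assms by (subst card_Un_disjoint) auto
    moreover have "card ({u\<in>V. \<phi> u < \<phi> v} \<union> {v}) \<le> card (S v)" by (rule card_mono[OF finS sub1])
    ultimately have L: "(\<Sum>i<\<phi> v. lvl V \<phi> i) + 1 \<le> \<alpha> v" using v card_lvl_less[OF assms] by (simp add: \<alpha>_def)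
    have sub2: "S v \<subseteq> {u\<in>V. \<phi> u < Suc (\<phi> v)}"
    proof
      fix u assume u: "u \<in> S v"
      show "u \<in> {u\<in>V. \<phi> u < Suc (\<phi> v)}"
      proof (rule ccontr)
        assume "u \<notin> {u\<in>V. \<phi> u < Suc (\<phi> v)}"
        then have "Suc (\<phi> v) \<le> \<phi> u" "u \<in> V" using u by (auto simp: S_def)
        then have "key v < Suc (\<phi> v) * n" using rl[OF v] by (simp add: key_def)
        also have "\<dots> \<le> \<phi> u * n" using \<open>Suc (\<phi> v) \<le> \<phi> u\<close> by (intro mult_le_mono1)
        also have "\<dots> \<le> key u" by (simp add: key_def)
        finally show False using u by (simp add: S_def)
      qed
    qed
    have "card (S v) \<le> card {u\<in>V. \<phi> u < Suc (\<phi> v)}" by (rule card_mono) (use assms sub2 in auto)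
    then have U: "\<alpha> v \<le> (\<Sum>i\<le>\<phi> v. lvl V \<phi> i)" using v card_lvl_less[OF assms]
      by (simp add: \<alpha>_def lessThan_Suc_atMost)
    show ?thesis using L U by simp
  qed
  have "\<alpha> \<in> compatible V \<phi>"
    unfolding compatible_def using rng bounds inj img n_def
    by (auto simp: bij_betw_def \<alpha>_def PiE_def extensional_def Pi_def)
  then show ?thesis by blast
qed




definition sw :: "'a \<Rightarrow> 'a \<Rightarrow> ('a \<Rightarrow> nat) \<Rightarrow> ('a \<Rightarrow> nat)" where
  "sw u v \<alpha> = \<alpha>(u := \<alpha> v, v := \<alpha> u)"

lemma sw_sw: "sw u v (sw u v \<alpha>) = \<alpha>"
  by (auto simp: sw_def fun_eq_iff)

lemma sw_compat:
  assumes "u \<in> V" "v \<in> V" "\<phi> u = \<phi> v" "\<alpha> \<in> compatible V \<phi>"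
  shows "sw u v \<alpha> \<in> compatible V \<phi>"
proof -
  have pi: "\<alpha> \<in> V \<rightarrow>\<^sub>E {1..card V}" and ab: "bij_betw \<alpha> V {1..card V}"
    and bd: "\<And>w. w \<in> V \<Longrightarrow> (\<Sum>i<\<phi> w. lvl V \<phi> i) + 1 \<le> \<alpha> w \<and> \<alpha> w \<le> (\<Sum>i\<le>\<phi> w. lvl V \<phi> i)"
    using assms(4) by (simp_all add: compatible_def)
  define \<beta> where "\<beta> = sw u v \<alpha>"
  have bv: "\<beta> w = (if w = v then \<alpha> u else if w = u then \<alpha> v else \<alpha> w)" for w
    by (simp add: \<beta>_def sw_def)
  define t where "t w = (if w = u then v else if w = v then u else w)" for w
  have tb: "bij_betw t V V"
  proof (rule bij_betw_byWitness[where f'=t])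
    show "\<forall>a\<in>V. t (t a) = a" by (simp add: t_def)
    show "\<forall>a\<in>V. t (t a) = a" by (simp add: t_def)
    show "t ` V \<subseteq> V" using assms(1,2) by (auto simp: t_def)
    then show "t ` V \<subseteq> V" .
  qed
  have c1: "bij_betw (\<alpha> \<circ> t) V {1..card V}" by (rule bij_betw_trans[OF tb ab])
  have eqs: "\<And>w. w \<in> V \<Longrightarrow> (\<alpha> \<circ> t) w = \<beta> w" by (simp add: t_def bv)
  have sb: "bij_betw \<beta> V {1..card V}" using bij_betw_cong[of V "\<alpha> \<circ> t" \<beta>, OF eqs] c1 by simp
  have pb: "\<beta> \<in> V \<rightarrow>\<^sub>E {1..card V}"
  proof -
    have "\<forall>w\<in>V. \<beta> w \<in> {1..card V}" using pi assms(1,2) by (auto simp: bv PiE_iff)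
    moreover have "\<beta> \<in> extensional V"
      using pi assms(1,2) by (auto simp: bv PiE_iff extensional_def)
    ultimately show ?thesis by (simp add: PiE_iff)
  qed
  have bb: "(\<Sum>i<\<phi> w. lvl V \<phi> i) + 1 \<le> \<beta> w \<and> \<beta> w \<le> (\<Sum>i\<le>\<phi> w. lvl V \<phi> i)" if w: "w \<in> V" for w
  proof (cases "w = v")
    case True then show ?thesis using bd[OF assms(1)] assms(3) by (simp add: bv)
  next
    case False
    show ?thesis
    proof (cases "w = u")
      case True then show ?thesis using bd[OF assms(2)] assms(3) False by (simp add: bv)
    next
      case False2: False
      then show ?thesis using bd[OF w] False by (simp add: bv)
    qed
  qed
  show ?thesis unfolding \<beta>_def[symmetric] compatible_def using pb sb bb by blast
qed

lemma card_swap_eq: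
  assumes "u \<in> V" "v \<in> V" "\<phi> u = \<phi> v"
    and "\<And>\<alpha>. \<alpha> \<in> compatible V \<phi> \<Longrightarrow> Q (sw u v \<alpha>) = P \<alpha>"
  shows "card {\<alpha>\<in>compatible V \<phi>. P \<alpha>} = card {\<alpha>\<in>compatible V \<phi>. Q \<alpha>}"
proof (rule bij_betw_same_card)
  show "bij_betw (sw u v) {\<alpha>\<in>compatible V \<phi>. P \<alpha>} {\<alpha>\<in>compatible V \<phi>. Q \<alpha>}"
  proof (rule bij_betw_byWitness[where f'="sw u v"])
    show "sw u v ` {\<alpha>\<in>compatible V \<phi>. P \<alpha>} \<subseteq> {\<alpha>\<in>compatible V \<phi>. Q \<alpha>}"
      using assms sw_compat by auto
    show "sw u v ` {\<alpha>\<in>compatible V \<phi>. Q \<alpha>} \<subseteq> {\<alpha>\<in>compatible V \<phi>. P \<alpha>}"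
    proof
      fix \<beta> assume "\<beta> \<in> sw u v ` {\<alpha>\<in>compatible V \<phi>. Q \<alpha>}"
      then obtain \<alpha> where \<alpha>: "\<alpha> \<in> compatible V \<phi>" "Q \<alpha>" "\<beta> = sw u v \<alpha>" by auto
      have c: "\<beta> \<in> compatible V \<phi>" using \<alpha> sw_compat assms by auto
      have "Q (sw u v \<beta>)" using \<alpha> by (simp add: sw_sw)
      then have "P \<beta>" using assms(4)[OF c] by simp
      then show "\<beta> \<in> {\<alpha>\<in>compatible V \<phi>. P \<alpha>}" using c by simp
    qed
  qed (auto simp: sw_sw)
qed

definition mid :: "('a \<Rightarrow> nat) \<Rightarrow> 'a \<Rightarrow> 'a \<Rightarrow> 'a \<Rightarrow> bool" where
  "mid \<alpha> x y z \<longleftrightarrow> (\<alpha> y < \<alpha> x \<and> \<alpha> x < \<alpha> z) \<or> (\<alpha> z < \<alpha> x \<and> \<alpha> x < \<alpha> y)"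

lemma sat_iff: "satisfies \<alpha> (x, {y, z}) \<longleftrightarrow> mid \<alpha> x y z"
  unfolding satisfies_def mid_def by (auto simp: doubleton_eq_iff)

definition prob :: "nat \<Rightarrow> nat \<Rightarrow> nat \<Rightarrow> real" where
  "prob a b c = (if b = c then (if a = b then 1/3 else 0)
      else if a = b \<or> a = c then 1/2
      else if (b < a \<and> a < c) \<or> (c < a \<and> a < b) then 1 else 0)"

lemma mid_empty:
  assumes "t \<in> V" "u \<in> V" "v \<in> V"
    "(\<phi> t < \<phi> u \<and> \<phi> t < \<phi> v) \<or> (\<phi> u < \<phi> t \<and> \<phi> v < \<phi> t)"
  shows "{\<alpha>\<in>compatible V \<phi>. mid \<alpha> t u v} = {}"
  using assms compat_mono[of _ V \<phi>] unfolding mid_def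
  by (smt (verit, ccfv_threshold) empty_iff mem_Collect_eq not_less_iff_gr_or_eq subsetI subset_antisym)

lemma mid_full:
  assumes "t \<in> V" "u \<in> V" "v \<in> V"
    "(\<phi> u < \<phi> t \<and> \<phi> t < \<phi> v) \<or> (\<phi> v < \<phi> t \<and> \<phi> t < \<phi> u)"
  shows "{\<alpha>\<in>compatible V \<phi>. mid \<alpha> t u v} = compatible V \<phi>"
  using assms compat_mono[of _ V \<phi>] unfolding mid_def by blast

lemma w_formula:
  assumes fin: "finite V" and V: "x \<in> V" "y \<in> V" "z \<in> V" and d: "x \<noteq> y" "x \<noteq> z" "y \<noteq> z"
  shows "w V (x, {y, z}) \<phi> = prob (\<phi> x) (\<phi> y) (\<phi> z) - 1/3"
proof -
  define CP where "CP = compatible V \<phi>"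
  define Mx where "Mx = {\<alpha>\<in>CP. mid \<alpha> x y z}"
  define My where "My = {\<alpha>\<in>CP. mid \<alpha> y x z}"
  define Mz where "Mz = {\<alpha>\<in>CP. mid \<alpha> z x y}"
  have finCP: "finite CP"
  proof (rule finite_subset)
    show "CP \<subseteq> V \<rightarrow>\<^sub>E {1..card V}" by (auto simp: CP_def compatible_def)
    show "finite (V \<rightarrow>\<^sub>E {1..card V})" using fin by (simp add: finite_PiE)
  qed
  have pos: "card CP > 0" using finCP compat_nonempty[OF fin] by (simp add: CP_def card_gt_0_iff)
  have injs: "\<alpha> x \<noteq> \<alpha> y \<and> \<alpha> x \<noteq> \<alpha> z \<and> \<alpha> y \<noteq> \<alpha> z" if "\<alpha> \<in> CP" for \<alpha>
  proof -
    have "inj_on \<alpha> V" using that by (simp add: CP_def compatible_def bij_betw_def)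
    then show ?thesis using V d by (metis inj_onD)
  qed
  have cover: "CP = Mx \<union> My \<union> Mz"
  proof
    show "CP \<subseteq> Mx \<union> My \<union> Mz"
    proof
      fix \<alpha> assume a: "\<alpha> \<in> CP"
      then have "mid \<alpha> x y z \<or> mid \<alpha> y x z \<or> mid \<alpha> z x y" using injs[OF a] unfolding mid_def by arith
      then show "\<alpha> \<in> Mx \<union> My \<union> Mz" using a by (auto simp: Mx_def My_def Mz_def)
    qed
  qed (auto simp: Mx_def My_def Mz_def)
  have d1: "Mx \<inter> My = {}" by (auto simp: Mx_def My_def mid_def)
  have d2: "(Mx \<union> My) \<inter> Mz = {}" by (auto simp: Mx_def My_def Mz_def mid_def)
  have finM: "finite Mx" "finite My" "finite Mz" using finCP by (auto simp: Mx_def My_def Mz_def)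
  have part: "card CP = card Mx + card My + card Mz"
    using cover card_Un_disjoint[OF _ _ d1] card_Un_disjoint[OF _ _ d2] finM by simp
  have wval: "w V (x, {y, z}) \<phi> = real (card Mx) / real (card CP) - 1/3"
    unfolding w_def Mx_def CP_def by (simp add: sat_iff)
  have sxy: "\<phi> x = \<phi> y \<Longrightarrow> card Mx = card My"
    unfolding Mx_def My_def CP_def
    by (rule card_swap_eq[where u=x and v=y]) (use V d in \<open>auto simp: sw_def mid_def\<close>)
  have sxz: "\<phi> x = \<phi> z \<Longrightarrow> card Mx = card Mz"
    unfolding Mx_def Mz_def CP_def
    by (rule card_swap_eq[where u=x and v=z]) (use V d in \<open>auto simp: sw_def mid_def\<close>)
  consider "(\<phi> y < \<phi> x \<and> \<phi> x < \<phi> z) \<or> (\<phi> z < \<phi> x \<and> \<phi> x < \<phi> y)"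
    | "(\<phi> x < \<phi> y \<and> \<phi> x < \<phi> z) \<or> (\<phi> y < \<phi> x \<and> \<phi> z < \<phi> x)"
    | "\<phi> x = \<phi> y" "\<phi> y = \<phi> z"
    | "\<phi> x = \<phi> y" "\<phi> z \<noteq> \<phi> x"
    | "\<phi> x = \<phi> z" "\<phi> y \<noteq> \<phi> x"
    by arith
  then show ?thesis
  proof cases
    case 1
    then have "Mx = CP" unfolding Mx_def CP_def by (rule mid_full[OF V])
    then show ?thesis using wval pos 1 by (auto simp: prob_def)
  next
    case 2
    then have "Mx = {}" unfolding Mx_def CP_def by (rule mid_empty[OF V])
    then show ?thesis using wval 2 by (auto simp: prob_def)
  next
    case 3
    then have "real (card Mx) / real (card CP) = 1 / 3" using pos part sxy sxz by (simp add: field_simps)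
    then show ?thesis using wval 3 by (simp add: prob_def)
  next
    case 4
    then have "(\<phi> z < \<phi> x \<and> \<phi> z < \<phi> y) \<or> (\<phi> x < \<phi> z \<and> \<phi> y < \<phi> z)" by arith
    then have "Mz = {}" unfolding Mz_def CP_def by (rule mid_empty[OF V(3,1,2)])
    then have "real (card Mx) / real (card CP) = 1 / 2" using pos part sxy 4 by (simp add: field_simps)
    then show ?thesis using wval 4 by (auto simp: prob_def)
  next
    case 5
    then have "(\<phi> y < \<phi> x \<and> \<phi> y < \<phi> z) \<or> (\<phi> x < \<phi> y \<and> \<phi> z < \<phi> y)" by arith
    then have "My = {}" unfolding My_def CP_def by (rule mid_empty[OF V(2,1,3)])
    then have "real (card Mx) / real (card CP) = 1 / 2" using pos part sxz 5 by (simp add: field_simps)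
    then show ?thesis using wval 5 by (auto simp: prob_def)
  qed
qed




lemma upd_PiE: "\<phi> \<in> V \<rightarrow>\<^sub>E {0..3::nat} \<Longrightarrow> a \<in> V \<Longrightarrow> i \<in> {0..3} \<Longrightarrow> \<phi>(a := i) \<in> V \<rightarrow>\<^sub>E {0..3}"
  by (auto simp: PiE_iff extensional_def)

lemma split_coord:
  fixes G :: "('a \<Rightarrow> nat) \<Rightarrow> real"
  assumes fin: "finite V" and a: "a \<in> V" and Qinv: "\<And>\<phi> i. Q (\<phi>(a := i)) = Q \<phi>"
  shows "(\<Sum>\<phi>\<in>{\<phi>\<in>V \<rightarrow>\<^sub>E {0..3}. Q \<phi>}. G \<phi>)
       = (\<Sum>\<phi>\<in>{\<phi>\<in>V \<rightarrow>\<^sub>E {0..3}. Q \<phi> \<and> \<phi> a = 0}. \<Sum>i\<in>{0..3}. G (\<phi>(a := i)))"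
proof -
  define A where "A = {\<phi>\<in>V \<rightarrow>\<^sub>E {0..3::nat}. Q \<phi>}"
  define A0 where "A0 = {\<phi>\<in>V \<rightarrow>\<^sub>E {0..3::nat}. Q \<phi> \<and> \<phi> a = 0}"
  have finA: "finite A" unfolding A_def using fin by (simp add: finite_PiE)
  have finA0: "finite A0" unfolding A0_def using fin by (simp add: finite_PiE)
  have eachi: "(\<Sum>\<phi>\<in>A0. G (\<phi>(a := i))) = (\<Sum>\<phi>\<in>{\<psi>\<in>A. \<psi> a = i}. G \<phi>)" if i: "i \<in> {0..3}" for i
  proof (rule sum.reindex_bij_betw)
    show "bij_betw (\<lambda>\<phi>. \<phi>(a := i)) A0 {\<psi>\<in>A. \<psi> a = i}"
    proof (rule bij_betw_byWitness[where f'="\<lambda>\<phi>. \<phi>(a := 0)"])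
      show "\<forall>x\<in>A0. x(a := i, a := 0) = x" by (auto simp: A0_def fun_eq_iff)
      show "\<forall>y\<in>{\<psi> \<in> A. \<psi> a = i}. y(a := 0, a := i) = y" by (auto simp: fun_eq_iff)
      show "(\<lambda>\<phi>. \<phi>(a := i)) ` A0 \<subseteq> {\<psi> \<in> A. \<psi> a = i}"
        using i a Qinv by (auto simp: A0_def A_def intro!: upd_PiE)
      show "(\<lambda>\<phi>. \<phi>(a := 0)) ` {\<psi> \<in> A. \<psi> a = i} \<subseteq> A0"
        using a Qinv by (auto simp: A0_def A_def intro!: upd_PiE)
    qed
  qed
  have "(\<Sum>\<phi>\<in>A0. \<Sum>i\<in>{0..3}. G (\<phi>(a := i))) = (\<Sum>i\<in>{0..3}. \<Sum>\<phi>\<in>A0. G (\<phi>(a := i)))"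
    by (rule sum.swap)
  also have "\<dots> = (\<Sum>i\<in>{0..3}. \<Sum>\<phi>\<in>{\<psi>\<in>A. \<psi> a = i}. G \<phi>)"
    using eachi by (rule sum.cong[OF refl])
  also have "\<dots> = (\<Sum>\<phi>\<in>A. G \<phi>)"
    by (rule sum.group) (use finA a in \<open>auto simp: A_def PiE_iff\<close>)
  finally show ?thesis by (simp add: A_def A0_def)
qed

lemma zero_lemma:
  fixes F G :: "('a \<Rightarrow> nat) \<Rightarrow> real"
  assumes fin: "finite V" and a: "a \<in> V" and Finv: "\<And>\<phi> i. F (\<phi>(a := i)) = F \<phi>"
    and G0: "\<And>\<phi>. \<phi> \<in> V \<rightarrow>\<^sub>E {0..3} \<Longrightarrow> (\<Sum>i\<in>{0..3}. G (\<phi>(a := i))) = 0"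
  shows "(\<Sum>\<phi>\<in>V \<rightarrow>\<^sub>E {0..3}. F \<phi> * G \<phi>) = 0"
proof -
  have "(\<Sum>\<phi>\<in>V \<rightarrow>\<^sub>E {0..3}. F \<phi> * G \<phi>) = (\<Sum>\<phi>\<in>{\<phi>\<in>V \<rightarrow>\<^sub>E {0..3}. True}. F \<phi> * G \<phi>)" by simp
  also have "\<dots> = (\<Sum>\<phi>\<in>{\<phi>\<in>V \<rightarrow>\<^sub>E {0..3}. True \<and> \<phi> a = 0}. \<Sum>i\<in>{0..3}. F (\<phi>(a := i)) * G (\<phi>(a := i)))"
    by (rule split_coord[OF fin a]) simp
  also have "\<dots> = (\<Sum>\<phi>\<in>{\<phi>\<in>V \<rightarrow>\<^sub>E {0..3}. True \<and> \<phi> a = 0}. F \<phi> * (\<Sum>i\<in>{0..3}. G (\<phi>(a := i))))"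
    by (simp add: Finv sum_distrib_left)
  also have "\<dots> = 0" using G0 by simp
  finally show ?thesis .
qed

lemma triple_sum:
  fixes F :: "nat \<Rightarrow> nat \<Rightarrow> nat \<Rightarrow> real"
  assumes fin: "finite V" and V: "a \<in> V" "b \<in> V" "c \<in> V" and d: "a \<noteq> b" "a \<noteq> c" "b \<noteq> c"
  shows "(\<Sum>\<phi>\<in>V \<rightarrow>\<^sub>E {0..3}. F (\<phi> a) (\<phi> b) (\<phi> c))
    = real (card {\<phi>\<in>V \<rightarrow>\<^sub>E {0..3::nat}. \<phi> a = 0 \<and> \<phi> b = 0 \<and> \<phi> c = 0})
      * (\<Sum>k\<in>{0..3}. \<Sum>j\<in>{0..3}. \<Sum>i\<in>{0..3}. F i j k)"
proof -
  have "(\<Sum>\<phi>\<in>V \<rightarrow>\<^sub>E {0..3}. F (\<phi> a) (\<phi> b) (\<phi> c)) = (\<Sum>\<phi>\<in>{\<phi>\<in>V \<rightarrow>\<^sub>E {0..3}. True}. F (\<phi> a) (\<phi> b) (\<phi> c))" by simp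
  also have "\<dots> = (\<Sum>\<phi>\<in>{\<phi>\<in>V \<rightarrow>\<^sub>E {0..3}. True \<and> \<phi> a = 0}. \<Sum>i\<in>{0..3}. F i (\<phi> b) (\<phi> c))"
    by (subst split_coord[OF fin V(1)]) (use d in auto)
  also have "\<dots> = (\<Sum>\<phi>\<in>{\<phi>\<in>V \<rightarrow>\<^sub>E {0..3}. \<phi> a = 0}. \<Sum>i\<in>{0..3}. F i (\<phi> b) (\<phi> c))" by simp
  also have "\<dots> = (\<Sum>\<phi>\<in>{\<phi>\<in>V \<rightarrow>\<^sub>E {0..3}. \<phi> a = 0 \<and> \<phi> b = 0}. \<Sum>j\<in>{0..3}. \<Sum>i\<in>{0..3}. F i j (\<phi> c))"
    by (subst split_coord[OF fin V(2)]) (use d in auto)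
  also have "\<dots> = (\<Sum>\<phi>\<in>{\<phi>\<in>V \<rightarrow>\<^sub>E {0..3}. (\<phi> a = 0 \<and> \<phi> b = 0) \<and> \<phi> c = (0::nat)}. \<Sum>k\<in>{0..3}. \<Sum>j\<in>{0..3}. \<Sum>i\<in>{0..3}. F i j k)"
    by (subst split_coord[OF fin V(3)]) (use d in auto)
  also have "\<dots> = real (card {\<phi>\<in>V \<rightarrow>\<^sub>E {0..3::nat}. \<phi> a = 0 \<and> \<phi> b = 0 \<and> \<phi> c = 0})
      * (\<Sum>k\<in>{0..3}. \<Sum>j\<in>{0..3}. \<Sum>i\<in>{0..3}. F i j k)" by (simp add: conj_assoc)
  finally show ?thesis .
qed

definition Htab :: "int list list list" where
  "Htab = [[[0,5,-1,-4],[5,2,-2,-5],[-1,-2,2,1],[-4,-5,1,8]],[[-10,-1,7,4],[-1,0,2,-1],[7,2,-4,-5],[4,-1,-5,2]],[[2,-5,-1,4],[-5,-4,2,7],[-1,2,0,-1],[4,7,-1,-10]],[[8,1,-5,-4],[1,2,-2,-1],[-5,-2,2,5],[-4,-1,5,0]]]"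

definition H :: "nat \<Rightarrow> nat \<Rightarrow> nat \<Rightarrow> real" where
  "H i j k = real_of_int (Htab ! i ! (min j k) ! (max j k)) / 24"

lemma H_sym: "H i j k = H i k j"
  by (simp add: H_def min.commute max.commute)

lemma set03: "{0..3::nat} = {0,1,2,3}" by auto

lemma H_zero1: "j \<in> {0..3} \<Longrightarrow> k \<in> {0..3} \<Longrightarrow> (\<Sum>i\<in>{0..3}. H i j k) = 0"
  unfolding set03 by (auto simp: H_def Htab_def)

lemma H_zero2: "i \<in> {0..3} \<Longrightarrow> k \<in> {0..3} \<Longrightarrow> (\<Sum>j\<in>{0..3}. H i j k) = 0"
  unfolding set03 by (auto simp: H_def Htab_def)

lemma H_zero3: "i \<in> {0..3} \<Longrightarrow> j \<in> {0..3} \<Longrightarrow> (\<Sum>k\<in>{0..3}. H i j k) = 0"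
  unfolding set03 by (auto simp: H_def Htab_def)




lemma num1: "(\<Sum>k\<in>{0..3}. \<Sum>j\<in>{0..3}. \<Sum>i\<in>{0..3}. (2 * (prob i j k - 1/3) - H i j k) * H i j k) = 11/6"
  unfolding set03 by code_simp

lemma num2: "(\<Sum>k\<in>{0..3}. \<Sum>j\<in>{0..3}. \<Sum>i\<in>{0..3}. (2 * (prob i j k - 1/3) - H i j k) * H j i k) = -11/12"
  unfolding set03 by code_simp

lemma num3: "(\<Sum>k\<in>{0..3}. \<Sum>j\<in>{0..3}. \<Sum>i\<in>{0..3}. (2 * (prob i j k - 1/3) - H i j k) * H k i j) = -11/12"
  unfolding set03 by code_simp

lemma num4: "(\<Sum>k\<in>{0..3::nat}. \<Sum>j\<in>{0..3::nat}. \<Sum>i\<in>{0..3::nat}. (1::real)) = 64"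
  by simp




definition rep :: "'a btw \<Rightarrow> 'a \<times> 'a" where
  "rep c = (SOME p. snd c = {fst p, snd p})"

definition hc :: "'a btw \<Rightarrow> ('a \<Rightarrow> nat) \<Rightarrow> real" where
  "hc c \<phi> = H (\<phi> (fst c)) (\<phi> (fst (rep c))) (\<phi> (snd (rep c)))"

lemma hc_eq: "hc (x, {y, z}) \<phi> = H (\<phi> x) (\<phi> y) (\<phi> z)"
proof -
  have "\<exists>p. snd (x, {y, z}) = {fst p, snd p}" by (rule exI[of _ "(y, z)"]) simp
  then have "snd (x, {y, z}) = {fst (rep (x, {y, z})), snd (rep (x, {y, z}))}"
    unfolding rep_def by (rule someI_ex)
  then have "{y, z} = {fst (rep (x, {y, z})), snd (rep (x, {y, z}))}" by simp
  then have "(fst (rep (x, {y, z})) = y \<and> snd (rep (x, {y, z})) = z) \<or>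
             (fst (rep (x, {y, z})) = z \<and> snd (rep (x, {y, z})) = y)"
    by (auto simp: doubleton_eq_iff)
  then show ?thesis unfolding hc_def using H_sym by auto
qed

lemma vars_eq: "vars (x, {y, z}) = {x, y, z}" by (simp add: vars_def)

lemma PiE_val: "\<phi> \<in> V \<rightarrow>\<^sub>E {0..3::nat} \<Longrightarrow> v \<in> V \<Longrightarrow> \<phi> v \<in> {0..3}"
  by (auto simp: PiE_iff)

lemma E_zero:
  assumes fin: "finite V"
    and c: "x \<in> V" "y \<in> V" "z \<in> V" "x \<noteq> y" "x \<noteq> z" "y \<noteq> z"
    and d: "x' \<in> V" "y' \<in> V" "z' \<in> V" "x' \<noteq> y'" "x' \<noteq> z'" "y' \<noteq> z'"
    and ne: "{x', y', z'} \<noteq> {x, y, z}"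
  shows "(\<Sum>\<phi>\<in>V \<rightarrow>\<^sub>E {0..3}. (2 * w V (x, {y, z}) \<phi> - hc (x, {y, z}) \<phi>) * hc (x', {y', z'}) \<phi>) = 0"
proof -
  have "\<exists>a\<in>{x', y', z'}. a \<notin> {x, y, z}"
  proof (rule ccontr)
    assume "\<not> ?thesis"
    then have sub: "{x', y', z'} \<subseteq> {x, y, z}" by blast
    have "card {x', y', z'} = card {x, y, z}" using c d by simp
    then show False using card_subset_eq[OF _ sub] ne by simp
  qed
  then obtain a where a: "a \<in> {x', y', z'}" "a \<notin> {x, y, z}" by blast
  have aV: "a \<in> V" using a d by auto
  show ?thesis
  proof (rule zero_lemma[OF fin aV])
    fix \<phi> :: "'a \<Rightarrow> nat" and i
    show "2 * w V (x, {y, z}) (\<phi>(a := i)) - hc (x, {y, z}) (\<phi>(a := i)) =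
          2 * w V (x, {y, z}) \<phi> - hc (x, {y, z}) \<phi>"
    proof -
      have "x \<noteq> a" "y \<noteq> a" "z \<noteq> a" using a(2) by auto
      then show ?thesis by (simp add: w_formula[OF fin c] hc_eq)
    qed
  next
    fix \<phi> :: "'a \<Rightarrow> nat" assume \<phi>: "\<phi> \<in> V \<rightarrow>\<^sub>E {0..3}"
    show "(\<Sum>i\<in>{0..3}. hc (x', {y', z'}) (\<phi>(a := i))) = 0"
    proof -
      consider "a = x'" | "a = y'" | "a = z'" using a(1) by blast
      then show ?thesis
      proof cases
        case 1
        then show ?thesis using d H_zero1[OF PiE_val[OF \<phi> d(2)] PiE_val[OF \<phi> d(3)]] by (simp add: hc_eq)
      next
        case 2
        then show ?thesis using d H_zero2[OF PiE_val[OF \<phi> d(1)] PiE_val[OF \<phi> d(3)]] by (simp add: hc_eq)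
      next
        case 3
        then show ?thesis using d H_zero3[OF PiE_val[OF \<phi> d(1)] PiE_val[OF \<phi> d(2)]] by (simp add: hc_eq)
      qed
    qed
  qed
qed

lemma E_vals:
  assumes fin: "finite V"
    and c: "x \<in> V" "y \<in> V" "z \<in> V" "x \<noteq> y" "x \<noteq> z" "y \<noteq> z"
  defines "K \<equiv> real (card {\<phi>\<in>V \<rightarrow>\<^sub>E {0..3::nat}. \<phi> x = 0 \<and> \<phi> y = 0 \<and> \<phi> z = 0})"
  shows "real (card (V \<rightarrow>\<^sub>E {0..3::nat})) = K * 64"
    and "(\<Sum>\<phi>\<in>V \<rightarrow>\<^sub>E {0..3}. (2 * w V (x, {y, z}) \<phi> - hc (x, {y, z}) \<phi>) * hc (x, {y, z}) \<phi>) = K * (11/6)"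
    and "(\<Sum>\<phi>\<in>V \<rightarrow>\<^sub>E {0..3}. (2 * w V (x, {y, z}) \<phi> - hc (x, {y, z}) \<phi>) * hc (y, {x, z}) \<phi>) = K * (-11/12)"
    and "(\<Sum>\<phi>\<in>V \<rightarrow>\<^sub>E {0..3}. (2 * w V (x, {y, z}) \<phi> - hc (x, {y, z}) \<phi>) * hc (z, {x, y}) \<phi>) = K * (-11/12)"
proof -
  have "real (card (V \<rightarrow>\<^sub>E {0..3::nat})) = (\<Sum>\<phi>\<in>V \<rightarrow>\<^sub>E {0..3::nat}. (\<lambda>i j k. (1::real)) (\<phi> x) (\<phi> y) (\<phi> z))"
    by simp
  also have "\<dots> = K * 64" unfolding K_def by (subst triple_sum[OF fin c]) (simp only: num4)
  finally show "real (card (V \<rightarrow>\<^sub>E {0..3::nat})) = K * 64" .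
  have "(\<Sum>\<phi>\<in>V \<rightarrow>\<^sub>E {0..3}. (2 * w V (x, {y, z}) \<phi> - hc (x, {y, z}) \<phi>) * hc (x, {y, z}) \<phi>)
     = (\<Sum>\<phi>\<in>V \<rightarrow>\<^sub>E {0..3}. (\<lambda>i j k. (2 * (prob i j k - 1/3) - H i j k) * H i j k) (\<phi> x) (\<phi> y) (\<phi> z))"
    by (simp add: w_formula[OF fin c] hc_eq)
  also have "\<dots> = K * (11/6)" unfolding K_def by (subst triple_sum[OF fin c]) (simp only: num1)
  finally show "(\<Sum>\<phi>\<in>V \<rightarrow>\<^sub>E {0..3}. (2 * w V (x, {y, z}) \<phi> - hc (x, {y, z}) \<phi>) * hc (x, {y, z}) \<phi>) = K * (11/6)" .
  have "(\<Sum>\<phi>\<in>V \<rightarrow>\<^sub>E {0..3}. (2 * w V (x, {y, z}) \<phi> - hc (x, {y, z}) \<phi>) * hc (y, {x, z}) \<phi>)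
     = (\<Sum>\<phi>\<in>V \<rightarrow>\<^sub>E {0..3}. (\<lambda>i j k. (2 * (prob i j k - 1/3) - H i j k) * H j i k) (\<phi> x) (\<phi> y) (\<phi> z))"
    by (simp add: w_formula[OF fin c] hc_eq)
  also have "\<dots> = K * (-11/12)" unfolding K_def by (subst triple_sum[OF fin c]) (simp only: num2)
  finally show "(\<Sum>\<phi>\<in>V \<rightarrow>\<^sub>E {0..3}. (2 * w V (x, {y, z}) \<phi> - hc (x, {y, z}) \<phi>) * hc (y, {x, z}) \<phi>) = K * (-11/12)" .
  have "(\<Sum>\<phi>\<in>V \<rightarrow>\<^sub>E {0..3}. (2 * w V (x, {y, z}) \<phi> - hc (x, {y, z}) \<phi>) * hc (z, {x, y}) \<phi>)
     = (\<Sum>\<phi>\<in>V \<rightarrow>\<^sub>E {0..3}. (\<lambda>i j k. (2 * (prob i j k - 1/3) - H i j k) * H k i j) (\<phi> x) (\<phi> y) (\<phi> z))"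
    by (simp add: w_formula[OF fin c] hc_eq)
  also have "\<dots> = K * (-11/12)" unfolding K_def by (subst triple_sum[OF fin c]) (simp only: num3)
  finally show "(\<Sum>\<phi>\<in>V \<rightarrow>\<^sub>E {0..3}. (2 * w V (x, {y, z}) \<phi> - hc (x, {y, z}) \<phi>) * hc (z, {x, y}) \<phi>) = K * (-11/12)" .
qed

theorem lemma7:
  fixes V :: "'a set" and \<C> :: "'a btw set"
  assumes "finite V"
    and "finite \<C>"
    and "\<forall>c\<in>\<C>. btw_constraint V c"
    and "\<not> has_complete_triple \<C>"
  shows "(\<Sum>\<phi>\<in>V \<rightarrow>\<^sub>E {0..3::nat}. (W V \<C> \<phi>)^2) / real (card (V \<rightarrow>\<^sub>E {0..3::nat}))
           \<ge> 11 / 768 * real (card \<C>)"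
proof -
  note fin = assms(1)
  define \<Phi> where "\<Phi> = V \<rightarrow>\<^sub>E {0..3::nat}"
  define N where "N = real (card \<Phi>)"
  define g where "g \<phi> = (\<Sum>d\<in>\<C>. hc d \<phi>)" for \<phi>
  define E where "E c d = (\<Sum>\<phi>\<in>\<Phi>. (2 * w V c \<phi> - hc c \<phi>) * hc d \<phi>)" for c d
  have finP: "finite \<Phi>" unfolding \<Phi>_def using fin by (simp add: finite_PiE)
  have "(\<lambda>v. if v \<in> V then 0 else undefined) \<in> \<Phi>" by (auto simp: \<Phi>_def PiE_iff extensional_def)
  then have Npos: "N > 0" unfolding N_def using finP card_gt_0_iff by fastforce
  have step1: "(\<Sum>\<phi>\<in>\<Phi>. 2 * W V \<C> \<phi> * g \<phi> - (g \<phi>)^2) \<le> (\<Sum>\<phi>\<in>\<Phi>. (W V \<C> \<phi>)^2)"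
  proof (rule sum_mono)
    fix \<phi> show "2 * W V \<C> \<phi> * g \<phi> - (g \<phi>)^2 \<le> (W V \<C> \<phi>)^2"
    proof -
      have "0 \<le> (W V \<C> \<phi> - g \<phi>)^2" by simp
      moreover have "(W V \<C> \<phi> - g \<phi>)^2 = (W V \<C> \<phi>)^2 - 2 * W V \<C> \<phi> * g \<phi> + (g \<phi>)^2"
        by (simp add: power2_eq_square algebra_simps)
      ultimately show ?thesis by linarith
    qed
  qed
  have step2: "(\<Sum>\<phi>\<in>\<Phi>. 2 * W V \<C> \<phi> * g \<phi> - (g \<phi>)^2) = (\<Sum>c\<in>\<C>. \<Sum>d\<in>\<C>. E c d)"
  proof -
    have "\<And>\<phi>. 2 * W V \<C> \<phi> * g \<phi> - (g \<phi>)^2 = (\<Sum>c\<in>\<C>. \<Sum>d\<in>\<C>. (2 * w V c \<phi> - hc c \<phi>) * hc d \<phi>)"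
    proof -
      fix \<phi>
      have "2 * W V \<C> \<phi> * g \<phi> - (g \<phi>)^2 = (2 * W V \<C> \<phi> - g \<phi>) * g \<phi>"
        by (simp add: power2_eq_square algebra_simps)
      also have "2 * W V \<C> \<phi> - g \<phi> = (\<Sum>c\<in>\<C>. 2 * w V c \<phi> - hc c \<phi>)"
        by (simp add: W_def g_def sum_subtractf sum_distrib_left)
      finally show "2 * W V \<C> \<phi> * g \<phi> - (g \<phi>)^2 = (\<Sum>c\<in>\<C>. \<Sum>d\<in>\<C>. (2 * w V c \<phi> - hc c \<phi>) * hc d \<phi>)"
        by (simp only: g_def sum_product)
    qed
    then have "(\<Sum>\<phi>\<in>\<Phi>. 2 * W V \<C> \<phi> * g \<phi> - (g \<phi>)^2) = (\<Sum>\<phi>\<in>\<Phi>. \<Sum>c\<in>\<C>. \<Sum>d\<in>\<C>. (2 * w V c \<phi> - hc c \<phi>) * hc d \<phi>)"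
      by simp
    also have "\<dots> = (\<Sum>c\<in>\<C>. \<Sum>\<phi>\<in>\<Phi>. \<Sum>d\<in>\<C>. (2 * w V c \<phi> - hc c \<phi>) * hc d \<phi>)"
      by (rule sum.swap)
    also have "\<dots> = (\<Sum>c\<in>\<C>. \<Sum>d\<in>\<C>. E c d)"
      unfolding E_def by (rule sum.cong[OF refl]) (rule sum.swap)
    finally show ?thesis .
  qed
  have step3: "11 / 768 * N \<le> (\<Sum>d\<in>\<C>. E c d)" if cC: "c \<in> \<C>" for c
  proof -
    obtain x y z where c: "c = (x, {y, z})" and xyz: "x \<in> V" "y \<in> V" "z \<in> V" "x \<noteq> y" "x \<noteq> z" "y \<noteq> z"
      using assms(3) cC unfolding btw_constraint_def by blast
    define K where "K = real (card {\<phi>\<in>V \<rightarrow>\<^sub>E {0..3::nat}. \<phi> x = 0 \<and> \<phi> y = 0 \<and> \<phi> z = 0})"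
    note ev = E_vals[OF fin xyz, folded K_def]
    have NK: "N = K * 64" using ev(1) by (simp add: N_def \<Phi>_def)
    have K0: "K \<ge> 0" by (simp add: K_def)
    define cy where "cy = (y, {x, z})"
    define cz where "cz = (z, {x, y})"
    have Ecc: "E c c = K * (11/6)" using ev(2) by (simp add: E_def c \<Phi>_def)
    have Ecy: "E c cy = K * (-11/12)" using ev(3) by (simp add: E_def c cy_def \<Phi>_def)
    have Ecz: "E c cz = K * (-11/12)" using ev(4) by (simp add: E_def c cz_def \<Phi>_def)
    define D where "D = {d\<in>\<C>. vars d = vars c}"
    have finC: "finite \<C>" by (rule assms(2))
    have sumD: "(\<Sum>d\<in>\<C>. E c d) = (\<Sum>d\<in>D. E c d)"
    proof (rule sum.mono_neutral_right[OF finC])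
      show "D \<subseteq> \<C>" by (auto simp: D_def)
      show "\<forall>d\<in>\<C> - D. E c d = 0"
      proof
        fix d assume d: "d \<in> \<C> - D"
        obtain x' y' z' where d': "d = (x', {y', z'})" and xyz': "x' \<in> V" "y' \<in> V" "z' \<in> V" "x' \<noteq> y'" "x' \<noteq> z'" "y' \<noteq> z'"
          using assms(3) d unfolding btw_constraint_def by blast
        have "{x', y', z'} \<noteq> {x, y, z}" using d by (simp add: D_def d' c vars_eq)
        then show "E c d = 0" unfolding E_def c d' \<Phi>_def by (rule E_zero[OF fin xyz xyz'])
      qed
    qed
    have Dsub: "D \<subseteq> {c, cy, cz}"
    proof
      fix d assume d: "d \<in> D"
      obtain x' y' z' where d': "d = (x', {y', z'})" and xyz': "x' \<in> V" "y' \<in> V" "z' \<in> V" "x' \<noteq> y'" "x' \<noteq> z'" "y' \<noteq> z'"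
        using assms(3) d unfolding D_def btw_constraint_def by blast
      have eq: "{x', y', z'} = {x, y, z}" using d by (simp add: D_def d' c vars_eq)
      have yz': "{y', z'} = {x, y, z} - {x'}" using eq xyz' by auto
      have "x' \<in> {x, y, z}" using eq by auto
      then consider "x' = x" | "x' = y" | "x' = z" by blast
      then show "d \<in> {c, cy, cz}"
      proof cases
        case 1
        then have "{y', z'} = {y, z}" using yz' xyz by auto
        then show ?thesis using 1 by (simp add: d' c)
      next
        case 2
        then have "{y', z'} = {x, z}" using yz' xyz by auto
        then show ?thesis using 2 by (simp add: d' cy_def)
      next
        case 3
        then have "{y', z'} = {x, y}" using yz' xyz by auto
        then show ?thesis using 3 by (simp add: d' cz_def)
      qed
    qed
    have cD: "c \<in> D" using cC by (simp add: D_def)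
    have dist: "c \<noteq> cy" "c \<noteq> cz" "cy \<noteq> cz" using xyz by (auto simp: c cy_def cz_def)
    have notboth: "\<not> (cy \<in> D \<and> cz \<in> D)"
    proof
      assume both: "cy \<in> D \<and> cz \<in> D"
      then have cyC: "cy \<in> \<C>" and czC: "cz \<in> \<C>" and vy: "vars cy = vars c" and vz: "vars cz = vars c"
        by (auto simp: D_def)
      have "has_complete_triple \<C>" unfolding has_complete_triple_def
        by (rule bexI[OF _ cC], rule bexI[OF _ cyC], rule bexI[OF _ czC]) (use dist vy vz in auto)
      then show False using assms(4) by simp
    qed
    have "(\<Sum>d\<in>D. E c d) \<ge> K * (11/12)"
    proof (cases "cy \<in> D")
      case True
      then have "cz \<notin> D" using notboth by blast
      then have "D = {c, cy}" using True Dsub cD by auto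
      then show ?thesis using dist Ecc Ecy by simp
    next
      case False
      show ?thesis
      proof (cases "cz \<in> D")
        case True
        then have "D = {c, cz}" using False Dsub cD by auto
        then show ?thesis using dist Ecc Ecz by simp
      next
        case False2: False
        then have "D = {c}" using False Dsub cD by auto
        then show ?thesis using Ecc K0 by simp
      qed
    qed
    then show ?thesis using sumD NK by simp
  qed
  have "real (card \<C>) * (11 / 768 * N) \<le> (\<Sum>c\<in>\<C>. \<Sum>d\<in>\<C>. E c d)"
    using sum_mono[of \<C> "\<lambda>_. 11 / 768 * N" "\<lambda>c. \<Sum>d\<in>\<C>. E c d"] step3 by simp
  then have "11 / 768 * real (card \<C>) * N \<le> (\<Sum>\<phi>\<in>\<Phi>. (W V \<C> \<phi>)^2)"
    using step1 step2 by (simp add: algebra_simps)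
  then show ?thesis using Npos by (simp add: N_def \<Phi>_def field_simps)
qed


end
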